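(* Let $\alpha>-1$ and let $\Sigma$ be a compact $\alpha$-stationary surface whose boundary $\partial\Sigma$ is a circle contained in a horizontal plane $\{z=c\}$ with center on the $z$-axis. Let $D$ be the horizontal closed round disc bounded by $\partial\Sigma$, viewed as a subset of $\mathbb R^2$ (the $xy$-coordinates). Then $\Sigma$ is contained in the vertical solid cylinder $D\times\mathbb R$.
   Context: Let $\Sigma$ be a connected oriented surface immersed in $\mathbb R^3\setminus\{0\}$ with unit normal $\nu$ and mean curvature $H$ (sum of the principal curvatures). For $\alpha\in\mathbb R$, $\Sigma$ is called $\alpha$-stationary if $H(p)=\alpha\,\frac{\langle\nu(p),p\rangle}{|p|^2}$ for all $p\in\Sigma$. A compact surface $\Sigma$ with boundary is said to have boundary (or span) a curve $\Gamma$ if it is given by an immersion whose restriction to $\partial\Sigma$ is a diffeomorphism onto $\Gamma$. *)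

theory Defs
  imports "HOL-Analysis.Analysis"
begin

text \<open>Closed upper half-plane, the model space for surfaces with boundary.\<close>
definition halfplane :: "(real \<times> real) set" where
  "halfplane = {z. snd z \<ge> 0}"

text \<open>Mean curvature (sum of principal curvatures) of a parametrisation with
  first derivatives xu, xv, second derivatives xuu, xuv, xvv, w.r.t. the unit
  normal N; second fundamental form e = xuu.N etc.  With this convention a sphere
  with inward normal has positive mean curvature.\<close>
definition mean_curv ::
  "real^3 \<Rightarrow> real^3 \<Rightarrow> real^3 \<Rightarrow> real^3 \<Rightarrow> real^3 \<Rightarrow> real^3 \<Rightarrow> real" where
  "mean_curv N xu xv xuu xuv xvv =
     (let E = xu \<bullet> xu; F = xu \<bullet> xv; G = xv \<bullet> xv;
          e = xuu \<bullet> N; f = xuv \<bullet> N; g = xvv \<bullet> N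
      in (e * G - 2 * f * F + g * E) / (E * G - F\<^sup>2))"

definition local_param ::
  "'m topology \<Rightarrow> ('m \<Rightarrow> real^3) \<Rightarrow> (real \<times> real \<Rightarrow> 'm) \<Rightarrow> (real \<times> real) set
   \<Rightarrow> (real \<times> real \<Rightarrow> real^3) \<Rightarrow> (real \<times> real \<Rightarrow> real^3) \<Rightarrow> (real \<times> real \<Rightarrow> real^3)
   \<Rightarrow> (real \<times> real \<Rightarrow> real^3) \<Rightarrow> (real \<times> real \<Rightarrow> real^3) \<Rightarrow> (real \<times> real \<Rightarrow> real^3) \<Rightarrow> bool"
  where
  "local_param T X phi U g gu gv guu guv gvv \<longleftrightarrow>
     openin (top_of_set halfplane) U \<and>
     openin T (phi ` U) \<and>
     homeomorphic_map (top_of_set U) (subtopology T (phi ` U)) phi \<and>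
     (\<exists>W. open W \<and> U \<subseteq> W \<and>
        (\<forall>z\<in>W. (g has_derivative (\<lambda>h. fst h *\<^sub>R gu z + snd h *\<^sub>R gv z)) (at z)) \<and>
        (\<forall>z\<in>W. (gu has_derivative (\<lambda>h. fst h *\<^sub>R guu z + snd h *\<^sub>R guv z)) (at z)) \<and>
        (\<forall>z\<in>W. (gv has_derivative (\<lambda>h. fst h *\<^sub>R guv z + snd h *\<^sub>R gvv z)) (at z)) \<and>
        continuous_on W guu \<and> continuous_on W guv \<and> continuous_on W gvv) \<and>
     (\<forall>z\<in>U. g z = X (phi z)) \<and>
     (\<forall>z\<in>U. cross3 (gu z) (gv z) \<noteq> 0)"

definition compact_immersed_surface :: "'m topology \<Rightarrow> ('m \<Rightarrow> real^3) \<Rightarrow> bool" where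
  "compact_immersed_surface T X \<longleftrightarrow>
     compact_space T \<and> connected_space T \<and> Hausdorff_space T \<and>
     (\<forall>m\<in>topspace T. \<exists>phi U g gu gv guu guv gvv.
        local_param T X phi U g gu gv guu guv gvv \<and> m \<in> phi ` U)"

definition surf_boundary :: "'m topology \<Rightarrow> ('m \<Rightarrow> real^3) \<Rightarrow> 'm set" where
  "surf_boundary T X = {m. \<exists>phi U g gu gv guu guv gvv.
        local_param T X phi U g gu gv guu guv gvv \<and> (\<exists>z\<in>U. snd z = 0 \<and> phi z = m)}"

definition alpha_stationary_wrt ::
  "real \<Rightarrow> 'm topology \<Rightarrow> ('m \<Rightarrow> real^3) \<Rightarrow> ('m \<Rightarrow> real^3) \<Rightarrow> bool" where
  "alpha_stationary_wrt \<alpha> T X nu \<longleftrightarrow>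
     continuous_map T euclidean nu \<and>
     (\<forall>m\<in>topspace T. norm (nu m) = 1 \<and> X m \<noteq> 0) \<and>
     (\<forall>phi U g gu gv guu guv gvv. local_param T X phi U g gu gv guu guv gvv \<longrightarrow>
        (\<forall>z\<in>U. nu (phi z) \<bullet> gu z = 0 \<and> nu (phi z) \<bullet> gv z = 0 \<and>
           mean_curv (nu (phi z)) (gu z) (gv z) (guu z) (guv z) (gvv z)
             = \<alpha> * (nu (phi z) \<bullet> g z) / (norm (g z))\<^sup>2))"

definition alpha_stationary :: "real \<Rightarrow> 'm topology \<Rightarrow> ('m \<Rightarrow> real^3) \<Rightarrow> bool" where
  "alpha_stationary \<alpha> T X \<longleftrightarrow> (\<exists>nu. alpha_stationary_wrt \<alpha> T X nu)"

end

theory Submission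
  imports Defs
begin

lemma alg:
  fixes pax pbx pcx uax ubx ucx vax vbx vcx nax nbx ncx uuax uubx uucx uvax uvbx uvcx vvax vvbx vvcx \<alpha> :: real
  defines "E \<equiv> uax*uax+ubx*ubx+ucx*ucx" and "F \<equiv> uax* vax+ubx* vbx+ucx* vcx" and "G \<equiv> vax* vax+vbx* vbx+vcx* vcx"
  defines "Q \<equiv> \<lambda>a b. (a*uax+b* vax)^2 + (a*ubx+b* vbx)^2
      + pax*(a*(a*uuax+b*uvax)+b*(a*uvax+b* vvax)) + pbx*(a*(a*uubx+b*uvbx)+b*(a*uvbx+b* vvbx))"
  assumes hu: "pax*uax+pbx*ubx = 0" and hv: "pax* vax+pbx* vbx = 0"
    and nu: "nax*uax+nbx*ubx+ncx*ucx = 0" and nv: "nax* vax+nbx* vbx+ncx* vcx = 0"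
    and nn: "nax*nax+nbx*nbx+ncx*ncx = 1"
    and cr: "(ubx* vcx-ucx* vbx, ucx* vax-uax* vcx, uax* vbx-ubx* vax) \<noteq> (0,0,0)"
    and rho: "pax^2+pbx^2 > 0"
    and Q1: "Q G (-F) \<le> 0" and Q2: "Q 0 1 \<le> 0"
    and H: "((uuax*nax+uubx*nbx+uucx*ncx) * G - 2 * (uvax*nax+uvbx*nbx+uvcx*ncx) * F + (vvax*nax+vvbx*nbx+vvcx*ncx) * E)
            / (E * G - F^2) = \<alpha> * (nax*pax+nbx*pbx+ncx*pcx) / (pax*pax+pbx*pbx+pcx*pcx)"
    and al: "\<alpha> > -1"
  shows False
proof -
  define c1 where "c1 = ubx* vcx-ucx* vbx"
  define c2 where "c2 = ucx* vax-uax* vcx"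
  define c3 where "c3 = uax* vbx-ubx* vax"
  have q1: "pax*c3 = 0" unfolding c3_def using hu hv by algebra
  have q2: "pbx*c3 = 0" unfolding c3_def using hu hv by algebra
  have c3: "c3 = 0" using q1 q2 rho
    by (metis add.right_neutral mult_eq_0_iff power_zero_numeral less_irrefl)
  have n31: "ncx*c1 = 0" unfolding c1_def c3_def using nu nv c3 c3_def by algebra
  have n32: "ncx*c2 = 0" unfolding c2_def using nu nv c3 c3_def by algebra
  have cne: "c1 \<noteq> 0 \<or> c2 \<noteq> 0" using cr c3 unfolding c1_def c2_def c3_def by auto
  have ncx: "ncx = 0" using n31 n32 cne by auto
  have pc1: "pbx*c1 = pax*c2" unfolding c1_def c2_def using hu hv by algebra
  have nc1: "nbx*c1 = nax*c2" unfolding c1_def c2_def using nu nv ncx by algebra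
  define k where "k = pax*nbx - pbx*nax"
  have "k*c1 = 0" unfolding k_def using pc1 nc1 by algebra
  moreover have "k*c2 = 0" unfolding k_def using pc1 nc1 by algebra
  ultimately have k: "k = 0" using cne by auto
  define \<tau> where "\<tau> = nax*pax+nbx*pbx"
  have p1t: "pax = \<tau>*nax" unfolding \<tau>_def using k k_def nn ncx by algebra
  have p2t: "pbx = \<tau>*nbx" unfolding \<tau>_def using k k_def nn ncx by algebra
  have tau2: "\<tau>^2 = pax^2+pbx^2" using p1t p2t nn ncx by algebra
  have EGF: "E*G - F^2 = c1^2 + c2^2 + c3^2" unfolding E_def F_def G_def c1_def c2_def c3_def by algebra
  have EGFpos: "E*G - F^2 > 0" using EGF cne c3 by (auto simp: add_pos_nonneg sum_power2_gt_zero_iff)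
  have Gpos: "G > 0" unfolding G_def using cr
    by (smt (verit) c1_def c2_def c3 c3_def cne mult_eq_0_iff not_real_square_gt_zero)
  define S where "S = (uuax*nax+uubx*nbx+uucx*ncx) * G - 2 * (uvax*nax+uvbx*nbx+uvcx*ncx) * F + (vvax*nax+vvbx*nbx+vvcx*ncx) * E"
  have tr: "(uax^2+ubx^2)*G - 2*(uax* vax+ubx* vbx)*F + (vax^2+vbx^2)*E = E*G - F^2"
    unfolding E_def F_def G_def using c3 c3_def by algebra
  have comb: "Q G (-F) + (E*G-F^2) * Q 0 1 = G * ((E*G - F^2) + \<tau> * S)"
    unfolding Q_def S_def using tr p1t p2t ncx by algebra
  have "Q G (-F) + (E*G-F^2) * Q 0 1 \<le> 0" using Q1 Q2 EGFpos
    by (simp add: add_nonpos_nonpos mult_nonneg_nonpos)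
  hence "(E*G - F^2) + \<tau> * S \<le> 0" using comb Gpos by (simp add: mult_le_0_iff)
  moreover have "S = (E*G-F^2) * (\<alpha> * \<tau> / (pax*pax+pbx*pbx+pcx*pcx))"
    using H EGFpos ncx unfolding S_def \<tau>_def by (simp add: field_simps)
  ultimately have "(E*G - F^2) * (1 + \<alpha> * \<tau>^2 / (pax*pax+pbx*pbx+pcx*pcx)) \<le> 0"
    by (simp add: algebra_simps power2_eq_square)
  hence "1 + \<alpha> * \<tau>^2 / (pax*pax+pbx*pbx+pcx*pcx) \<le> 0" using EGFpos by (simp add: mult_le_0_iff)
  moreover have pp: "pax*pax+pbx*pbx+pcx*pcx > 0" using rho by (simp add: power2_eq_square add_pos_nonneg)
  ultimately have "pax*pax+pbx*pbx+pcx*pcx + \<alpha> * \<tau>^2 \<le> 0" by (simp add: field_simps)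
  hence "(1+\<alpha>) * (pax^2+pbx^2) + pcx^2 \<le> 0" using tau2 by (simp add: algebra_simps power2_eq_square)
  moreover have "(1+\<alpha>) * (pax^2+pbx^2) > 0" using al rho by simp
  ultimately show False by (smt (verit) zero_le_power2)
qed
lemma second_order:
  fixes \<phi> \<phi>' :: "real \<Rightarrow> real"
  assumes d0: "\<delta> > 0"
    and der: "\<And>t. \<bar>t\<bar> < \<delta> \<Longrightarrow> (\<phi> has_real_derivative \<phi>' t) (at t)"
    and der2: "(\<phi>' has_real_derivative d) (at 0)"
    and mx: "\<And>t. \<bar>t\<bar> < \<delta> \<Longrightarrow> \<phi> t \<le> \<phi> 0"
  shows "\<phi>' 0 = 0 \<and> d \<le> 0"
proof -
  have z: "\<phi>' 0 = 0"
    by (rule DERIV_local_max[OF der[of 0] d0]) (use d0 mx in auto)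
  moreover have "d \<le> 0"
  proof (rule ccontr)
    assume "\<not> d \<le> 0"
    then obtain d1 where d1: "d1 > 0" "\<And>h. h > 0 \<Longrightarrow> h < d1 \<Longrightarrow> \<phi>' 0 < \<phi>' (0 + h)"
      using DERIV_pos_inc_right[OF der2] by force
    define h where "h = min d1 \<delta> / 2"
    have h: "h > 0" "h < d1" "h < \<delta>" using d1 d0 by (auto simp: h_def)
    have dd: "\<exists>y. (\<phi> has_real_derivative y) (at x) \<and> 0 \<le> y" if "0 \<le> x" "x \<le> h/2" for x
    proof (cases "x = 0")
      case True thus ?thesis using der[of 0] d0 z by auto
    next
      case False thus ?thesis using der[of x] d1(2)[of x] h that z
        by (intro exI[of _ "\<phi>' x"]) auto
    qed
    have dp: "\<exists>y. (\<phi> has_real_derivative y) (at x) \<and> 0 < y" if "h/2 \<le> x" "x \<le> h" for x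
      using der[of x] d1(2)[of x] h z that by (intro exI[of _ "\<phi>' x"]) auto
    have "\<phi> 0 \<le> \<phi> (h/2)"
      using DERIV_nonneg_imp_nondecreasing[of 0 "h/2" \<phi>] h dd by force
    also have "\<phi> (h/2) < \<phi> h"
      using DERIV_pos_imp_increasing[of "h/2" h \<phi>] h dp by force
    also have "\<phi> h \<le> \<phi> 0" using mx h by auto
    finally show False by simp
  qed
  ultimately show ?thesis by simp
qed

lemma line_deriv:
  fixes G :: "real \<times> real \<Rightarrow> real^3"
  assumes "(G has_derivative (\<lambda>h. fst h *\<^sub>R Gu + snd h *\<^sub>R Gv)) (at (z0 + t *\<^sub>R (a,b)))"
  shows "((\<lambda>s. G (z0 + s *\<^sub>R (a,b))) has_vector_derivative (a *\<^sub>R Gu + b *\<^sub>R Gv)) (at t)"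
proof -
  have l: "((\<lambda>s. z0 + s *\<^sub>R (a,b)) has_derivative (\<lambda>s. s *\<^sub>R (a,b))) (at t)"
    by (auto intro!: derivative_eq_intros)
  have "((\<lambda>s. G (z0 + s *\<^sub>R (a,b))) has_derivative
     (\<lambda>s. fst (s *\<^sub>R (a,b)) *\<^sub>R Gu + snd (s *\<^sub>R (a,b)) *\<^sub>R Gv)) (at t)"
    using has_derivative_compose[OF l assms] by simp
  moreover have "(\<lambda>s. fst (s *\<^sub>R (a,b)) *\<^sub>R Gu + snd (s *\<^sub>R (a,b)) *\<^sub>R Gv) = (\<lambda>s. s *\<^sub>R (a *\<^sub>R Gu + b *\<^sub>R Gv))"
    by (auto simp: scaleR_add_right)
  ultimately show ?thesis unfolding has_vector_derivative_def by simp
qed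

lemma comp_deriv:
  fixes x :: "real \<Rightarrow> real^3"
  assumes "(x has_vector_derivative D) (at t)"
  shows "((\<lambda>s. x s $ i) has_real_derivative (D $ i)) (at t)"
proof -
  have "((\<lambda>s. x s $ i) has_derivative (\<lambda>s. (s *\<^sub>R D) $ i)) (at t)"
    using bounded_linear.has_derivative[OF bounded_linear_vec_nth assms[unfolded has_vector_derivative_def]] .
  moreover have "(\<lambda>s. (s *\<^sub>R D) $ i) = (\<lambda>s. (D $ i) * s)" by auto
  ultimately show ?thesis unfolding has_field_derivative_def by simp
qed

lemma prod_deriv:
  fixes x1 x2 y1 y2 :: "real \<Rightarrow> real"
  assumes "(x1 has_real_derivative d1) (at t)" "(x2 has_real_derivative d2) (at t)"
     "(y1 has_real_derivative e1) (at t)" "(y2 has_real_derivative e2) (at t)"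
  shows "((\<lambda>s. 2*(x1 s * y1 s + x2 s * y2 s)) has_real_derivative 2*(d1*y1 t + x1 t*e1 + (d2*y2 t + x2 t * e2))) (at t)"
  using assms by (auto intro!: derivative_eq_intros)

lemma sq_deriv:
  fixes x1 x2 :: "real \<Rightarrow> real"
  assumes "(x1 has_real_derivative d1) (at t)" "(x2 has_real_derivative d2) (at t)"
  shows "((\<lambda>s. (x1 s)^2 + (x2 s)^2) has_real_derivative 2*(x1 t * d1 + x2 t * d2)) (at t)"
  using assms by (auto intro!: derivative_eq_intros simp: algebra_simps)

lemma directional:
  fixes g gu gv guu guv gvv :: "real \<times> real \<Rightarrow> real^3"
  assumes e: "e > 0"
    and dg: "\<forall>z\<in>ball z0 e. (g has_derivative (\<lambda>h. fst h *\<^sub>R gu z + snd h *\<^sub>R gv z)) (at z)"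
    and dgu: "\<forall>z\<in>ball z0 e. (gu has_derivative (\<lambda>h. fst h *\<^sub>R guu z + snd h *\<^sub>R guv z)) (at z)"
    and dgv: "\<forall>z\<in>ball z0 e. (gv has_derivative (\<lambda>h. fst h *\<^sub>R guv z + snd h *\<^sub>R gvv z)) (at z)"
    and mx: "\<forall>z\<in>ball z0 e. (g z$1)^2 + (g z$2)^2 \<le> (g z0$1)^2 + (g z0$2)^2"
  shows "g z0$1 * (a*gu z0$1 + b*gv z0$1) + g z0$2*(a*gu z0$2 + b*gv z0$2) = 0 \<and>
   (a*gu z0$1 + b*gv z0$1)^2 + (a*gu z0$2+b*gv z0$2)^2
    + g z0$1 * (a*(a*guu z0$1 + b*guv z0$1) + b*(a*guv z0$1 + b*gvv z0$1))
    + g z0$2 * (a*(a*guu z0$2 + b*guv z0$2) + b*(a*guv z0$2 + b*gvv z0$2)) \<le> 0"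
proof -
  define \<delta> where "\<delta> = e / (norm (a,b) + 1)"
  have d0: "\<delta> > 0" using e by (simp add: \<delta>_def add_nonneg_pos)
  define \<gamma> where "\<gamma> = (\<lambda>s::real. z0 + s *\<^sub>R (a,b))"
  have inb: "\<gamma> t \<in> ball z0 e" if "\<bar>t\<bar> < \<delta>" for t
  proof -
    have "dist z0 (\<gamma> t) = norm (t *\<^sub>R (a,b))" unfolding \<gamma>_def dist_norm
      by (metis add_diff_cancel_left' norm_minus_commute)
    also have "\<dots> = \<bar>t\<bar> * norm (a,b)" by (rule norm_scaleR)
    also have "\<dots> \<le> \<bar>t\<bar> * (norm (a,b) + 1)" by (simp add: mult_left_mono)
    also have "\<dots> < \<delta> * (norm (a,b) + 1)"
      using that by (intro mult_strict_right_mono) (auto simp: add_nonneg_pos)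
    also have "\<dots> = e" unfolding \<delta>_def
      by (metis add_nonneg_pos norm_ge_zero zero_less_one nonzero_eq_divide_eq less_irrefl)
    finally show ?thesis by simp
  qed
  define W where "W = (\<lambda>z. a *\<^sub>R gu z + b *\<^sub>R gv z)"
  define \<phi> where "\<phi> = (\<lambda>s. (g (\<gamma> s)$1)^2 + (g (\<gamma> s)$2)^2)"
  define \<phi>' where "\<phi>' = (\<lambda>s. 2*(g (\<gamma> s)$1 * W (\<gamma> s)$1 + g (\<gamma> s)$2 * W (\<gamma> s)$2))"
  have der: "(\<phi> has_real_derivative \<phi>' t) (at t)" if "\<bar>t\<bar> < \<delta>" for t
  proof -
    have "((\<lambda>s. g (\<gamma> s)) has_vector_derivative W (\<gamma> t)) (at t)"
      unfolding \<gamma>_def W_def by (rule line_deriv) (use dg inb[OF that] in \<open>auto simp: \<gamma>_def\<close>)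
    from sq_deriv[OF comp_deriv[OF this, of 1] comp_deriv[OF this, of 2]]
    show ?thesis unfolding \<phi>_def \<phi>'_def .
  qed
  have g0: "\<gamma> 0 = z0" by (simp add: \<gamma>_def zero_prod_def)
  have vg: "((\<lambda>s. g (\<gamma> s)) has_vector_derivative W z0) (at 0)"
    using der d0 inb[of 0] g0 dg unfolding \<gamma>_def W_def by (intro line_deriv) (auto simp flip: zero_prod_def)
  have vu: "((\<lambda>s. gu (\<gamma> s)) has_vector_derivative (a *\<^sub>R guu z0 + b *\<^sub>R guv z0)) (at 0)"
    using d0 inb[of 0] g0 dgu unfolding \<gamma>_def by (intro line_deriv) (auto simp flip: zero_prod_def)
  have vv: "((\<lambda>s. gv (\<gamma> s)) has_vector_derivative (a *\<^sub>R guv z0 + b *\<^sub>R gvv z0)) (at 0)"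
    using d0 inb[of 0] g0 dgv unfolding \<gamma>_def by (intro line_deriv) (auto simp flip: zero_prod_def)
  define Wd where "Wd = a *\<^sub>R (a *\<^sub>R guu z0 + b *\<^sub>R guv z0) + b *\<^sub>R (a *\<^sub>R guv z0 + b *\<^sub>R gvv z0)"
  have vW: "((\<lambda>s. W (\<gamma> s)) has_vector_derivative Wd) (at 0)"
    unfolding W_def Wd_def by (intro has_vector_derivative_add bounded_linear.has_vector_derivative[OF bounded_linear_scaleR_right] vu vv)
  have der2: "(\<phi>' has_real_derivative
      2*(W z0$1 * W z0$1 + g z0$1 * Wd$1 + (W z0$2 * W z0$2 + g z0$2 * Wd$2))) (at 0)"
    using prod_deriv[OF comp_deriv[OF vg, of 1] comp_deriv[OF vg, of 2] comp_deriv[OF vW, of 1] comp_deriv[OF vW, of 2]]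
    unfolding \<phi>'_def g0 .
  have mx': "\<phi> t \<le> \<phi> 0" if "\<bar>t\<bar> < \<delta>" for t
    using mx inb[OF that] unfolding \<phi>_def g0 by auto
  from second_order[OF d0 der der2 mx']
  show ?thesis unfolding \<phi>'_def g0 W_def Wd_def
    by (simp add: algebra_simps power2_eq_square)
qed


lemma inner3: "(x::real^3) \<bullet> y = x$1*y$1 + x$2*y$2 + x$3*y$3"
  by (simp add: inner_vec_def sum_3)

lemma cross_ne:
  assumes "cross3 u v \<noteq> 0"
  shows "(u$2* v$3-u$3* v$2, u$3* v$1-u$1* v$3, u$1* v$2-u$2* v$1) \<noteq> (0::real,0::real,0::real)"
proof
  assume "(u$2* v$3-u$3* v$2, u$3* v$1-u$1* v$3, u$1* v$2-u$2* v$1) = (0::real,0::real,0::real)"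
  hence "cross3 u v = 0" by (simp add: vec_eq_iff forall_3 cross_components algebra_simps)
  thus False using assms by simp
qed

lemma X_cont:
  assumes "compact_immersed_surface T X"
  shows "continuous_map T euclidean X"
  unfolding continuous_map_openin_preimage_eq
proof (intro conjI allI impI)
  show "X \<in> topspace T \<rightarrow> topspace euclidean" by auto
  fix V :: "(real^3) set" assume "openin euclidean V"
  hence oV: "open V" by simp
  show "openin T (topspace T \<inter> X -` V)"
    unfolding openin_subopen[of T "topspace T \<inter> X -` V"]
  proof
    fix m assume m: "m \<in> topspace T \<inter> X -` V"
    then obtain phi U g gu gv guu guv gvv where lp: "local_param T X phi U g gu gv guu guv gvv"
      and mU: "m \<in> phi ` U"
      using assms unfolding compact_immersed_surface_def by blast
    from lp have oU: "openin T (phi ` U)"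
      and hom: "homeomorphic_map (top_of_set U) (subtopology T (phi ` U)) phi"
      and gX: "\<forall>z\<in>U. g z = X (phi z)"
      unfolding local_param_def by auto
    from lp obtain W where "U \<subseteq> W" and
      dW: "\<forall>z\<in>W. (g has_derivative (\<lambda>h. fst h *\<^sub>R gu z + snd h *\<^sub>R gv z)) (at z)"
      unfolding local_param_def by blast
    have cg: "continuous_on U g"
      by (rule has_derivative_continuous_on[where f'="\<lambda>z h. fst h *\<^sub>R gu z + snd h *\<^sub>R gv z"])
         (use dW \<open>U \<subseteq> W\<close> in \<open>auto intro: has_derivative_at_withinI\<close>)
    define S where "S = U \<inter> g -` V"
    have "openin (top_of_set U) S"
      unfolding S_def by (rule continuous_openin_preimage[OF cg, of UNIV]) (use oV in auto)
    hence "openin (subtopology T (phi ` U)) (phi ` S)"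
      using homeomorphic_map_openness[OF hom, of S] by (auto simp: S_def)
    hence oS: "openin T (phi ` S)" using openin_trans_full oU by blast
    have sub: "phi ` S \<subseteq> topspace T \<inter> X -` V"
      using openin_subset[OF oU] gX by (auto simp: S_def)
    have "m \<in> phi ` S" using mU m gX by (auto simp: S_def)
    thus "\<exists>Ta. openin T Ta \<and> m \<in> Ta \<and> Ta \<subseteq> topspace T \<inter> X -` V"
      using oS sub by blast
  qed
qed

theorem mainTheorem6:
  fixes T :: "'m topology" and X :: "'m \<Rightarrow> real^3" and \<alpha> c r :: real
  assumes "\<alpha> > -1"
    and "compact_immersed_surface T X"
    and "alpha_stationary \<alpha> T X"
    and "r > 0"
    and "inj_on X (surf_boundary T X)"
    and "X ` surf_boundary T X = {p. p $ 3 = c \<and> (p $ 1)\<^sup>2 + (p $ 2)\<^sup>2 = r\<^sup>2}"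
  shows "\<forall>m\<in>topspace T. (X m $ 1)\<^sup>2 + (X m $ 2)\<^sup>2 \<le> r\<^sup>2"
proof (rule ccontr)
  assume "\<not> ?thesis"
  then obtain m1 where m1: "m1 \<in> topspace T" "(X m1 $ 1)\<^sup>2 + (X m1 $ 2)\<^sup>2 > r\<^sup>2" by force
  obtain nu where nu: "alpha_stationary_wrt \<alpha> T X nu"
    using assms(3) unfolding alpha_stationary_def by blast
  define f :: "real^3 \<Rightarrow> real" where "f = (\<lambda>p. (p $ 1)\<^sup>2 + (p $ 2)\<^sup>2)"
  have cf: "continuous_map euclidean euclidean f"
    unfolding f_def by (simp add: continuous_intros)
  have cF: "continuous_map T euclidean (f \<circ> X)"
    by (rule continuous_map_compose[OF X_cont[OF assms(2)] cf])
  have "compactin T (topspace T)"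
    using assms(2) unfolding compact_immersed_surface_def compact_space_def by blast
  hence "compactin euclidean ((f \<circ> X) ` topspace T)" by (rule image_compactin[OF _ cF])
  hence "compact ((f \<circ> X) ` topspace T)" by simp
  then obtain m0 where m0: "m0 \<in> topspace T" and mx: "\<And>m. m \<in> topspace T \<Longrightarrow> f (X m) \<le> f (X m0)"
    using compact_attains_sup[of "(f \<circ> X) ` topspace T"] m1(1) by force
  have big: "f (X m0) > r\<^sup>2" using mx[OF m1(1)] m1(2) unfolding f_def by simp
  have notb: "m0 \<notin> surf_boundary T X"
  proof
    assume "m0 \<in> surf_boundary T X"
    hence "X m0 \<in> X ` surf_boundary T X" by blast
    hence "f (X m0) = r\<^sup>2" using assms(6) unfolding f_def by auto
    thus False using big by simp
  qed
  obtain phi U g gu gv guu guv gvv where lp: "local_param T X phi U g gu gv guu guv gvv"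
      and mU: "m0 \<in> phi ` U"
    using assms(2) m0 unfolding compact_immersed_surface_def by blast
  then obtain z0 where z0: "z0 \<in> U" "phi z0 = m0" by blast
  have "snd z0 \<noteq> 0"
  proof
    assume "snd z0 = 0"
    hence "m0 \<in> surf_boundary T X" unfolding surf_boundary_def using lp z0 by blast
    thus False using notb by simp
  qed
  from lp have oU: "openin (top_of_set halfplane) U"
      and oU2: "openin T (phi ` U)"
      and gX: "\<forall>z\<in>U. g z = X (phi z)"
      and cr: "\<forall>z\<in>U. cross3 (gu z) (gv z) \<noteq> 0"
      unfolding local_param_def by auto
  from lp obtain W where "U \<subseteq> W" and
      dg: "\<forall>z\<in>W. (g has_derivative (\<lambda>h. fst h *\<^sub>R gu z + snd h *\<^sub>R gv z)) (at z)" and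
      dgu: "\<forall>z\<in>W. (gu has_derivative (\<lambda>h. fst h *\<^sub>R guu z + snd h *\<^sub>R guv z)) (at z)" and
      dgv: "\<forall>z\<in>W. (gv has_derivative (\<lambda>h. fst h *\<^sub>R guv z + snd h *\<^sub>R gvv z)) (at z)"
      unfolding local_param_def by blast
  have "U \<subseteq> halfplane" using openin_imp_subset[OF oU] .
  hence sz: "snd z0 > 0" using z0 \<open>snd z0 \<noteq> 0\<close> unfolding halfplane_def by force
  obtain e0 where e0: "e0 > 0" "\<forall>x'\<in>halfplane. dist x' z0 < e0 \<longrightarrow> x' \<in> U"
    using oU z0(1) unfolding openin_euclidean_subtopology_iff by blast
  define e where "e = min e0 (snd z0)"
  have e: "e > 0" using e0 sz by (simp add: e_def)
  have ballU: "ball z0 e \<subseteq> U"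
  proof
    fix z assume "z \<in> ball z0 e"
    hence d: "dist z z0 < e" by (simp add: dist_commute)
    have "dist (snd z) (snd z0) \<le> dist z z0" by (rule dist_snd_le)
    hence "snd z > 0" using d unfolding e_def dist_real_def by linarith
    hence "z \<in> halfplane" by (simp add: halfplane_def)
    thus "z \<in> U" using e0 d unfolding e_def by auto
  qed
  have mxg: "\<forall>z\<in>ball z0 e. (g z$1)^2 + (g z$2)^2 \<le> (g z0$1)^2 + (g z0$2)^2"
  proof
    fix z assume zb: "z \<in> ball z0 e"
    hence "z \<in> U" using ballU by blast
    hence "phi z \<in> topspace T" using openin_subset[OF oU2] by blast
    from mx[OF this] show "(g z$1)^2 + (g z$2)^2 \<le> (g z0$1)^2 + (g z0$2)^2"
      using gX \<open>z \<in> U\<close> z0 unfolding f_def by auto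
  qed
  have bW: "ball z0 e \<subseteq> W" using ballU \<open>U \<subseteq> W\<close> by blast
  note dir = directional[OF e _ _ _ mxg, of gu gv guu guv gvv]
  have D: "\<And>a b. g z0$1 * (a*gu z0$1 + b*gv z0$1) + g z0$2*(a*gu z0$2 + b*gv z0$2) = 0 \<and>
   (a*gu z0$1 + b*gv z0$1)^2 + (a*gu z0$2+b*gv z0$2)^2
    + g z0$1 * (a*(a*guu z0$1 + b*guv z0$1) + b*(a*guv z0$1 + b*gvv z0$1))
    + g z0$2 * (a*(a*guu z0$2 + b*guv z0$2) + b*(a*guv z0$2 + b*gvv z0$2)) \<le> 0"
    by (rule dir) (use dg dgu dgv bW in auto)
  from nu have nuU: "\<forall>z\<in>U. nu (phi z) \<bullet> gu z = 0 \<and> nu (phi z) \<bullet> gv z = 0 \<and>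
           mean_curv (nu (phi z)) (gu z) (gv z) (guu z) (guv z) (gvv z)
             = \<alpha> * (nu (phi z) \<bullet> g z) / (norm (g z))\<^sup>2"
    and nn: "norm (nu m0) = 1" and Xn: "X m0 \<noteq> 0"
    unfolding alpha_stationary_wrt_def using lp m0 by blast+
  have p0: "g z0 = X m0" using gX z0 by auto
  have rpos: "(g z0$1)^2 + (g z0$2)^2 > 0" using big assms(4) p0 unfolding f_def
    by (smt (verit) zero_less_power2)
  have nU: "nu (phi z0) \<bullet> gu z0 = 0" "nu (phi z0) \<bullet> gv z0 = 0"
     "mean_curv (nu (phi z0)) (gu z0) (gv z0) (guu z0) (guv z0) (gvv z0)
             = \<alpha> * (nu (phi z0) \<bullet> g z0) / (norm (g z0))\<^sup>2" using nuU z0(1) by auto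
  have nn': "nu (phi z0) \<bullet> nu (phi z0) = 1" using nn z0(2) by (simp add: power2_norm_eq_inner[symmetric])
  have crz: "cross3 (gu z0) (gv z0) \<noteq> 0" using cr z0(1) by auto
  show False
  proof (rule alg[where pax="g z0$1" and pbx="g z0$2" and pcx="g z0$3"
      and uax="gu z0$1" and ubx="gu z0$2" and ucx="gu z0$3"
      and vax="gv z0$1" and vbx="gv z0$2" and vcx="gv z0$3"
      and nax="nu (phi z0)$1" and nbx="nu (phi z0)$2" and ncx="nu (phi z0)$3"
      and uuax="guu z0$1" and uubx="guu z0$2" and uucx="guu z0$3"
      and uvax="guv z0$1" and uvbx="guv z0$2" and uvcx="guv z0$3"
      and vvax="gvv z0$1" and vvbx="gvv z0$2" and vvcx="gvv z0$3" and \<alpha>=\<alpha>])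
    show "g z0$1 * gu z0$1 + g z0$2 * gu z0$2 = 0" using D[of 1 0] by simp
    show "g z0$1 * gv z0$1 + g z0$2 * gv z0$2 = 0" using D[of 0 1] by simp
    show "nu (phi z0)$1 * gu z0$1 + nu (phi z0)$2 * gu z0$2 + nu (phi z0)$3 * gu z0$3 = 0"
      using nU(1) by (simp add: inner3)
    show "nu (phi z0)$1 * gv z0$1 + nu (phi z0)$2 * gv z0$2 + nu (phi z0)$3 * gv z0$3 = 0"
      using nU(2) by (simp add: inner3)
    show "nu (phi z0)$1 * nu (phi z0)$1 + nu (phi z0)$2 * nu (phi z0)$2 + nu (phi z0)$3 * nu (phi z0)$3 = 1"
      using nn' by (simp add: inner3)
    show "(gu z0$2 * gv z0$3 - gu z0$3 * gv z0$2, gu z0$3 * gv z0$1 - gu z0$1 * gv z0$3,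
           gu z0$1 * gv z0$2 - gu z0$2 * gv z0$1) \<noteq> (0, 0, 0)"
      using cross_ne[OF crz] .
    show "(g z0$1)^2 + (g z0$2)^2 > 0" by (rule rpos)
    show "\<alpha> > -1" by (rule assms(1))
  qed (use D[of 0 1, THEN conjunct2] D[of "gv z0$1 * gv z0$1 + gv z0$2 * gv z0$2 + gv z0$3 * gv z0$3" "-(gu z0$1 * gv z0$1 + gu z0$2 * gv z0$2 + gu z0$3 * gv z0$3)", THEN conjunct2] nU(3) in
       \<open>simp_all add: mean_curv_def Let_def inner3 power2_norm_eq_inner\<close>)
qed

end
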